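(* Let $\Lambda_0\subset\mathbb{R}^n$ be an $n$-dimensional lattice of density $\beta$, used over an additive circularly-symmetric noise (ACSN) channel whose noise norm $\|z\|$ has density $f_{\|z\|}$. Then the error probability of the maximum-likelihood (nearest-lattice-point) decoder satisfies, for every $r>0$, $$P_e(\Lambda_0)\le\sum_{j=1}^{M}\mathcal{N}_j\int_{\lambda_j/2}^{r}f_{\|z\|}(\rho)\left(1-\left(\frac{\lambda_j}{2\rho}\right)^2\right)^{\frac{n-1}{2}}d\rho+\int_r^\infty f_{\|z\|}(\rho)\,d\rho,$$ where $M=M(r)$ is the largest index $j$ with $\lambda_j\le 2r$ (the sum being empty if $\lambda_1>2r$); hence $P_e(\Lambda_0)$ is at most the minimum over $r$ of the right-hand side.
   Context: An ACSN channel: the receiver observes $y=\lambda+z$, where $\lambda$ is the transmitted lattice point and $z\in\mathbb{R}^n$ is noise whose distribution is isotropic (invariant under orthogonal maps) with density a non-increasing function of $\|z\|$; $f_{\|z\|}$ is the density of $\|z\|$. The ML decoder errs when $z$ is not in the Voronoi cell $\{y:\|y\|<\|y-\lambda\|\ \forall\lambda\in\Lambda_0\setminus\{0\}\}$ of $0$; $P_e(\Lambda_0)$ is this probability. The distance series $0<\lambda_1<\lambda_2<\cdots$ lists the distinct Euclidean norms of nonzero vectors of $\Lambda_0$, and $\mathcal{N}_j=\#\{\lambda\in\Lambda_0:\|\lambda\|=\lambda_j\}$. *)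

theory Defs
  imports "HOL-Probability.Probability"
begin

text \<open>An n-dimensional (full-rank) lattice in R^n: the integer span of the columns
of an invertible n x n real matrix B.\<close>
definition is_lattice :: "(real^'n) set \<Rightarrow> bool" where
  "is_lattice L \<longleftrightarrow>
     (\<exists>B :: real^'n^'n. invertible B \<and>
        L = range (\<lambda>k :: int^'n. B *v (\<chi> i. real_of_int (k $ i))))"

text \<open>(Open) Voronoi cell of the origin.\<close>
definition voronoi0 :: "(real^'n) set \<Rightarrow> (real^'n) set" where
  "voronoi0 L = {y. \<forall>v\<in>L - {0}. norm y < norm (y - v)}"

text \<open>Distinct norms of nonzero lattice vectors.\<close>
definition lattice_norms :: "(real^'n) set \<Rightarrow> real set" where
  "lattice_norms L = {norm v | v. v \<in> L \<and> v \<noteq> 0}"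

text \<open>Distance series: lattice_dist L 1 < lattice_dist L 2 < ... lists the
distinct norms in increasing order (index 0 is an unused dummy value 0).\<close>
primrec lattice_dist :: "(real^'n) set \<Rightarrow> nat \<Rightarrow> real" where
  "lattice_dist L 0 = 0"
| "lattice_dist L (Suc j) = Inf {d \<in> lattice_norms L. d > lattice_dist L j}"

text \<open>Multiplicity N_j of the j-th distance.\<close>
definition lattice_mult :: "(real^'n) set \<Rightarrow> nat \<Rightarrow> nat" where
  "lattice_mult L j = card {v \<in> L. norm v = lattice_dist L j}"

text \<open>M(r): the largest index j \<ge> 1 with lambda_j \<le> 2r (0 if there is none).\<close>
definition lattice_M :: "(real^'n) set \<Rightarrow> real \<Rightarrow> nat" where
  "lattice_M L r = Max (insert 0 {j. 1 \<le> j \<and> lattice_dist L j \<le> 2 * r})"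

end

theory Submission
  imports Defs "HOL-Analysis.Analysis"
begin



proposition
 fixes f :: "real^'n::finite \<Rightarrow> real^'n"
  assumes "linear f" "S \<in> lmeasurable"
  shows measurable_linear_image_gen: "(f ` S) \<in> lmeasurable"
    and measure_linear_image_gen: "measure lebesgue (f ` S) = \<bar>det (matrix f)\<bar> * measure lebesgue S" (is "?Q f S")
proof -
  have "\<forall>S \<in> lmeasurable. (f ` S) \<in> lmeasurable \<and> ?Q f S"
  proof (rule induct_linear_elementary [OF \<open>linear f\<close>]; intro ballI)
    fix f g and S :: "(real,'n) vec set"
    assume "linear f" and "linear g"
      and f [rule_format]: "\<forall>S \<in> lmeasurable. f ` S \<in> lmeasurable \<and> ?Q f S"
      and g [rule_format]: "\<forall>S \<in> lmeasurable. g ` S \<in> lmeasurable \<and> ?Q g S"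
      and S: "S \<in> lmeasurable"
    then have gS: "g ` S \<in> lmeasurable"
      by blast
    show "(f \<circ> g) ` S \<in> lmeasurable \<and> ?Q (f \<circ> g) S"
      using f [OF gS] g [OF S] matrix_compose [OF \<open>linear g\<close> \<open>linear f\<close>]
      by (simp add: o_def image_comp abs_mult det_mul)
  next
    fix f :: "real^'n::_ \<Rightarrow> real^'n::_" and i and S :: "(real^'n::_) set"
    assume "linear f" and 0: "\<And>x. f x $ i = 0" and "S \<in> lmeasurable"
    then have "\<not> inj f"
      by (metis (full_types) linear_injective_imp_surjective one_neq_zero surjE vec_component)
    have detf: "det (matrix f) = 0"
      using \<open>\<not> inj f\<close> det_nz_iff_inj[OF \<open>linear f\<close>] by blast
    show "f ` S \<in> lmeasurable \<and> ?Q f S"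
    proof
      show "f ` S \<in> lmeasurable"
        using lmeasurable_iff_indicator_has_integral \<open>linear f\<close> \<open>\<not> inj f\<close> negligible_UNIV negligible_linear_singular_image by blast
      have "measure lebesgue (f ` S) = 0"
        by (meson \<open>\<not> inj f\<close> \<open>linear f\<close> negligible_imp_measure0 negligible_linear_singular_image)
      also have "\<dots> = \<bar>det (matrix f)\<bar> * measure lebesgue S"
        by (simp add: detf)
      finally show "?Q f S" .
    qed
  next
    fix c and S :: "(real^'n::_) set"
    assume "S \<in> lmeasurable"
    show "(\<lambda>a. \<chi> i. c i * a $ i) ` S \<in> lmeasurable \<and> ?Q (\<lambda>a. \<chi> i. c i * a $ i) S"
    proof
      show "(\<lambda>a. \<chi> i. c i * a $ i) ` S \<in> lmeasurable"
        by (simp add: \<open>S \<in> lmeasurable\<close> measurable_stretch)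
      show "?Q (\<lambda>a. \<chi> i. c i * a $ i) S"
        by (simp add: measure_stretch [OF \<open>S \<in> lmeasurable\<close>, of c] axis_def matrix_def det_diagonal)
    qed
  next
    fix m :: "'n" and n :: "'n" and S :: "(real, 'n) vec set"
    assume "m \<noteq> n" and "S \<in> lmeasurable"
    let ?h = "\<lambda>v::(real, 'n) vec. \<chi> i. v $ Transposition.transpose m n i"
    have lin: "linear ?h"
      by (rule linearI) (simp_all add: plus_vec_def scaleR_vec_def)
    have meq: "measure lebesgue ((\<lambda>v::(real, 'n) vec. \<chi> i. v $ Transposition.transpose m n i) ` cbox a b)
             = measure lebesgue (cbox a b)" for a b
    proof (cases "cbox a b = {}")
      case True then show ?thesis
        by simp
    next
      case False
      then have him: "?h ` (cbox a b) \<noteq> {}"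
        by blast
      have eq: "?h ` (cbox a b) = cbox (?h a) (?h b)"
        by (auto simp: image_iff lambda_swap_Galois mem_box_cart) (metis transpose_involutory)+
      show ?thesis
        using him prod.permute [OF permutes_swap_id, where S=UNIV and g="\<lambda>i. (b - a)$i", symmetric]
        by (simp add: eq content_cbox_cart False)
    qed
    have "(\<chi> i j. if Transposition.transpose m n i = j then 1 else 0) = (\<chi> i j. if j = Transposition.transpose m n i then 1 else (0::real))"
      by (auto intro!: Cart_lambda_cong)
    then have "matrix ?h = transpose(\<chi> i j. mat 1 $ i $ Transposition.transpose m n j)"
      by (auto simp: matrix_eq transpose_def axis_def mat_def matrix_def)
    then have 1: "\<bar>det (matrix ?h)\<bar> = 1"
      by (simp add: det_permute_columns permutes_swap_id sign_swap_id abs_mult)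
    show "?h ` S \<in> lmeasurable \<and> ?Q ?h S"
      using measure_linear_sufficient [OF lin \<open>S \<in> lmeasurable\<close>] meq 1 by force
  next
    fix m n :: "'n" and S :: "(real, 'n) vec set"
    assume "m \<noteq> n" and "S \<in> lmeasurable"
    let ?h = "\<lambda>v::(real, 'n) vec. \<chi> i. if i = m then v $ m + v $ n else v $ i"
    have lin: "linear ?h"
      by (rule linearI) (auto simp: algebra_simps plus_vec_def scaleR_vec_def vec_eq_iff)
    have 1: "det(matrix ?h) = 1"
    proof -
      have "matrix ?h = (\<chi> k. if k = m then row m (mat 1) + 1 *s row n (mat 1) else row k (mat 1))"
        using \<open>m \<noteq> n\<close> by (auto simp: matrix_def vec_eq_iff row_def mat_def axis_def)
      then show ?thesis using det_row_operation[OF \<open>m \<noteq> n\<close>, of "mat 1" 1] by simp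
    qed
    have meq: "measure lebesgue (?h ` (cbox a b)) = measure lebesgue (cbox a b)" for a b
    proof (cases "cbox a b = {}")
      case True then show ?thesis by simp
    next
      case False
      then have ne: "(+) (\<chi> i. if i = n then - a $ n else 0) ` cbox a b \<noteq> {}"
        by auto
      let ?v = "\<chi> i. if i = n then - a $ n else 0"
      have "?h ` cbox a b
            = (+) (\<chi> i. if i = m \<or> i = n then a $ n else 0) ` ?h ` (+) ?v ` (cbox a b)"
        using \<open>m \<noteq> n\<close> unfolding image_comp o_def by (force simp: vec_eq_iff)
      then have "measure lebesgue (?h ` (cbox a b))
               = measure lebesgue ((\<lambda>v. \<chi> i. if i = m then v $ m + v $ n else v $ i) `
                                   (+) ?v ` cbox a b)"
        by (rule ssubst) (rule measure_translation)
      also have "\<dots> = measure lebesgue ((\<lambda>v. \<chi> i. if i = m then v $ m + v $ n else v $ i) ` cbox (?v +a) (?v + b))"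
        by (metis (no_types, lifting) cbox_translation)
      also have "\<dots> = measure lebesgue ((+) ?v ` cbox a b)"
        apply (subst measure_shear_interval)
        using \<open>m \<noteq> n\<close> ne apply auto
        apply (simp add: cbox_translation)
        by (metis cbox_borel cbox_translation measure_completion sets_lborel)
      also have "\<dots> = measure lebesgue (cbox a b)"
        by (rule measure_translation)
        finally show ?thesis .
      qed
    show "?h ` S \<in> lmeasurable \<and> ?Q ?h S"
      using measure_linear_sufficient [OF lin \<open>S \<in> lmeasurable\<close>] meq 1 by force
  qed
  with assms show "(f ` S) \<in> lmeasurable" "?Q f S"
    by metis+
qed





lemma sector_ineq:
  fixes t s a :: real
  assumes "0 \<le> t" "t < 1" "t * s \<le> a" "a \<le> s" "s \<le> 1"
  shows "(a-t)^2*(1-t^2) + (s^2-a^2) \<le> 1-t^2"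
proof (cases "s = 0")
  case True
  then have "a = 0" using assms by simp
  have "t^2 \<le> 1" using assms by (simp add: power_le_one)
  then have "t^2 * (1-t^2) \<le> 1 * (1-t^2)" by (intro mult_right_mono) auto
  then show ?thesis using True \<open>a = 0\<close> by simp
next
  case False
  have "(1-t) * s \<ge> 0" using assms by (simp add: algebra_simps)
  then have "s \<ge> 0" using assms by (simp add: zero_le_mult_iff)
  then have s0: "s > 0" using False by simp
  define D where "D = 1 - t^2"
  have D0: "D \<ge> 0" using assms unfolding D_def by (simp add: abs_le_square_iff power_le_one)
  have id: "s * (D - D*(a-t)^2 + a^2 - s^2) = s*(1-s)*D^2 + t*(a-t * s)*(2 * s+t*a-t^2 * s) + (1-s)*(D*a^2+s^2-a^2)"
    unfolding D_def by algebra
  have a0: "a \<ge> 0" using assms s0 by (meson mult_nonneg_nonneg order_trans less_imp_le)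
  have t1: "s*(1-s)*D^2 \<ge> 0" using s0 assms D0 by simp
  have t2: "t*(a-t * s)*(2 * s+t*a-t^2 * s) \<ge> 0"
  proof -
    have "t^2 \<le> 1" using assms by (simp add: power_le_one)
    then have "2 * s+t*a-t^2 * s = s * (2 - t^2) + t * a" by (simp add: algebra_simps)
    moreover have "s * (2 - t^2) \<ge> 0" using s0 \<open>t^2 \<le> 1\<close> by simp
    moreover have "t * a \<ge> 0" using a0 assms by simp
    ultimately have "2 * s+t*a-t^2 * s \<ge> 0" by linarith
    then show ?thesis using assms by simp
  qed
  have t3: "(1-s)*(D*a^2+s^2-a^2) \<ge> 0"
  proof -
    have "D*a^2+s^2-a^2 = (s - t*a)*(s+t*a)" unfolding D_def by (simp add: algebra_simps power2_eq_square)
    moreover have "t * a \<le> a" using assms a0 by (simp add: mult_left_le_one_le)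
    ultimately have "D*a^2+s^2-a^2 \<ge> 0" using assms a0 by simp
    then show ?thesis using assms by simp
  qed
  have "s * (D - D*(a-t)^2 + a^2 - s^2) \<ge> 0" using id t1 t2 t3 by linarith
  then have "D - D*(a-t)^2 + a^2 - s^2 \<ge> 0" using s0 by (simp add: zero_le_mult_iff)
  moreover have "(a-t)^2*(1-t^2) = D*(a-t)^2" by (simp add: D_def)
  ultimately show ?thesis using D_def by linarith
qed


lemma measure_lebesgue_cball:
  assumes "r \<ge> 0" shows "measure lebesgue (cball (0::real^'n) r) = unit_ball_vol (CARD('n)) * r ^ CARD('n)"
proof -
  have "measure lebesgue (cball (0::real^'n) r) = measure lborel (cball (0::real^'n) r)"
    by (rule measure_completion) simp
  also have "\<dots> = unit_ball_vol (CARD('n)) * r ^ CARD('n)"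
    using content_cball[where c="0::real^'n" and r=r] assms by simp
  finally show ?thesis .
qed

lemma kappa_bound:
  fixes u :: "real^'n"
  assumes u: "norm u = 1" and t: "0 \<le> t" "t < 1"
  shows "measure lebesgue (cball 0 1 \<inter> {x. t * norm x \<le> x \<bullet> u})
     \<le> unit_ball_vol (CARD('n)) * sqrt (1 - t^2) ^ (CARD('n) - 1)"
proof -
  define l where "l = sqrt (1 - t^2)"
  have t2: "t^2 < 1" using t by (simp add: power_less_one_iff)
  have l0: "l > 0" unfolding l_def using t2 by simp
  have l2: "l^2 = 1 - t^2" unfolding l_def using t2 by simp
  have uu: "u \<bullet> u = 1" using u by (simp add: dot_square_norm)
  define T where "T = (\<lambda>x::real^'n. l *\<^sub>R x + ((1 - l) * (x \<bullet> u)) *\<^sub>R u)"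
  obtain k :: 'n where True by blast
  obtain Q :: "real^'n \<Rightarrow> real^'n" where Q: "orthogonal_transformation Q" "Q (axis k 1) = u"
    by (metis orthogonal_transformation_exists_1 norm_axis_1 u)
  have linQ: "linear Q" using Q by (simp add: orthogonal_transformation_linear)
  define m where "m = (\<lambda>i. if i = k then 1 else l)"
  define Dm where "Dm = (\<lambda>y::real^'n. \<chi> i. m i * y $ i)"
  have Dm_eq: "Dm y = l *\<^sub>R y + ((1 - l) * (y $ k)) *\<^sub>R axis k 1" for y :: "real^'n"
    by (simp add: Dm_def m_def vec_eq_iff axis_def algebra_simps)
  have Qu: "Q y \<bullet> u = y $ k" for y :: "real^'n"
  proof -
    have "Q y \<bullet> u = Q y \<bullet> Q (axis k 1)" using Q by simp
    also have "\<dots> = y \<bullet> axis k 1" using Q(1) unfolding orthogonal_transformation_def by blast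
    finally show ?thesis by (simp add: inner_axis)
  qed
  have TQ: "T (Q y) = Q (Dm y)" for y :: "real^'n"
    unfolding T_def Dm_eq using Q(2) linQ
    by (simp add: Qu linear_add linear_scale)
  have imgT: "T ` cball 0 1 = Q ` Dm ` cball 0 1"
  proof -
    have "cball (0::real^'n) 1 = Q ` cball 0 1"
      using image_orthogonal_transformation_cball[OF Q(1), of 0 1] linQ by (simp add: linear_0)
    then have "T ` cball 0 1 = T ` Q ` cball 0 1" by simp
    also have "\<dots> = Q ` Dm ` cball 0 1" by (simp only: image_image TQ)
    finally show ?thesis .
  qed
  have cb: "cball (0::real^'n) 1 \<in> lmeasurable" by simp
  have Dmeas: "Dm ` cball 0 1 \<in> lmeasurable"
    unfolding Dm_def using measurable_stretch[OF cb] by simp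
  have prodm: "prod m UNIV = l ^ (CARD('n) - 1)"
  proof -
    have "prod m UNIV = m k * prod m (UNIV - {k})" by (simp add: prod.remove)
    also have "prod m (UNIV - {k}) = prod (\<lambda>_. l) (UNIV - {k})"
      by (rule prod.cong) (auto simp: m_def)
    finally show ?thesis by (simp add: m_def card_Diff_singleton)
  qed
  have measT: "measure lebesgue (T ` cball 0 1) = unit_ball_vol (CARD('n)) * l ^ (CARD('n) - 1)"
  proof -
    have "measure lebesgue (T ` cball 0 1) = measure lebesgue (Q ` Dm ` cball 0 1)" using imgT by simp
    also have "\<dots> = measure lebesgue (Dm ` cball 0 1)"
      using measure_linear_image_gen[OF linQ Dmeas] Q(1) by simp
    also have "\<dots> = \<bar>prod m UNIV\<bar> * measure lebesgue (cball (0::real^'n) 1)"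
      unfolding Dm_def using measure_stretch[OF cb] by simp
    finally show ?thesis using prodm l0 measure_lebesgue_cball[of 1, where 'n='n] by simp
  qed
  have Tmeas: "T ` cball 0 1 \<in> lmeasurable"
    using imgT measurable_linear_image_gen[OF linQ Dmeas] by simp
  define E where "E = (+) (t *\<^sub>R u) ` T ` cball 0 1"
  have Emeas: "E \<in> lmeasurable" unfolding E_def using measurable_translation[OF Tmeas] .
  have measE: "measure lebesgue E = unit_ball_vol (CARD('n)) * l ^ (CARD('n) - 1)"
    unfolding E_def using measT by (simp add: measure_translation)
  have sub: "cball 0 1 \<inter> {x. t * norm x \<le> x \<bullet> u} \<subseteq> E"
  proof
    fix x :: "real^'n" assume x: "x \<in> cball 0 1 \<inter> {x. t * norm x \<le> x \<bullet> u}"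
    define a where "a = x \<bullet> u"
    define s where "s = norm x"
    define w where "w = x - a *\<^sub>R u"
    have wu: "w \<bullet> u = 0" unfolding w_def a_def using uu by (simp add: inner_diff_left)
    have ww: "w \<bullet> w = s^2 - a^2"
      unfolding w_def s_def using uu wu dot_square_norm[of x]
      by (simp add: inner_diff_left inner_diff_right a_def inner_commute power2_eq_square)
    define y where "y = (a - t) *\<^sub>R u + (1 / l) *\<^sub>R w"
    have yu: "y \<bullet> u = a - t" unfolding y_def using uu wu by (simp add: inner_add_left)
    have Ty: "T y = x - t *\<^sub>R u"
    proof -
      have "T y = l *\<^sub>R y + ((1 - l) * (a - t)) *\<^sub>R u" unfolding T_def using yu by simp
      also have "\<dots> = (a - t) *\<^sub>R u + w" unfolding y_def using l0 by (simp add: algebra_simps)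
      also have "\<dots> = x - t *\<^sub>R u" unfolding w_def by (simp add: algebra_simps)
      finally show ?thesis .
    qed
    have yy: "y \<bullet> y = (a - t)^2 + (s^2 - a^2) / l^2"
      unfolding y_def using uu wu ww
      by (simp add: inner_add_left inner_add_right inner_commute power2_eq_square)
    have hyp: "t * s \<le> a" "a \<le> s" "s \<le> 1"
      using x norm_cauchy_schwarz[of x u] u by (auto simp: a_def s_def)
    have "(a-t)^2*(1-t^2) + (s^2-a^2) \<le> 1-t^2" by (rule sector_ineq[OF t hyp])
    moreover have "(a - t)^2 + (s^2 - a^2) / l^2 = ((a-t)^2*(1-t^2) + (s^2-a^2)) / (1-t^2)"
      unfolding l2 using t2 by (simp add: field_simps)
    ultimately have "(a - t)^2 + (s^2 - a^2) / l^2 \<le> (1-t^2) / (1-t^2)"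
      using t2 by (metis divide_right_mono diff_ge_0_iff_ge less_imp_le)
    then have "(a - t)^2 + (s^2 - a^2) / l^2 \<le> 1" using t2 by simp
    then have "norm y \<le> 1" using yy by (simp add: norm_eq_sqrt_inner)
    then have "y \<in> cball 0 1" by simp
    moreover have "x = t *\<^sub>R u + T y" using Ty by simp
    ultimately show "x \<in> E" unfolding E_def by blast
  qed
  have "cball 0 1 \<inter> {x. t * norm x \<le> x \<bullet> u} \<in> sets lebesgue"
  proof -
    have "closed {x::real^'n. t * norm x \<le> x \<bullet> u}"
      by (intro closed_Collect_le continuous_intros)
    then show ?thesis by (intro sets.Int) (auto intro: borel_closed)
  qed
  then have "measure lebesgue (cball 0 1 \<inter> {x. t * norm x \<le> x \<bullet> u}) \<le> measure lebesgue E"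
    using sub Emeas by (intro measure_mono_fmeasurable) auto
  then show ?thesis using measE l_def by simp
qed


lemma closed_cone: "closed {x::real^'n. t * norm x \<le> x \<bullet> u}"
  by (intro closed_Collect_le continuous_intros)

lemma cone_lmeasurable: "cball (0::real^'n) R \<inter> {x. t * norm x \<le> x \<bullet> u} \<in> lmeasurable"
  by (intro lmeasurable_compact compact_Int_closed closed_cone) auto

lemma cone_scale:
  fixes u :: "real^'n"
  assumes R: "R > 0"
  shows "measure lebesgue (cball 0 R \<inter> {x. t * norm x \<le> x \<bullet> u})
       = R ^ CARD('n) * measure lebesgue (cball 0 1 \<inter> {x. t * norm x \<le> x \<bullet> u})"
proof -
  have img: "(*\<^sub>R) R ` (cball 0 1 \<inter> {x. t * norm x \<le> x \<bullet> u}) = cball 0 R \<inter> {x. t * norm x \<le> x \<bullet> u}"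
  proof (intro equalityI subsetI)
    fix y assume "y \<in> (*\<^sub>R) R ` (cball 0 1 \<inter> {x. t * norm x \<le> x \<bullet> u})"
    then obtain x where x: "x \<in> cball 0 1" "t * norm x \<le> x \<bullet> u" and y: "y = R *\<^sub>R x" by auto
    have "norm y \<le> R" using x R by (simp add: y mult_left_le)
    moreover have "t * norm y \<le> y \<bullet> u" using x R by (simp add: y mult.left_commute)
    ultimately show "y \<in> cball 0 R \<inter> {x. t * norm x \<le> x \<bullet> u}" by simp
  next
    fix y assume y: "y \<in> cball 0 R \<inter> {x. t * norm x \<le> x \<bullet> u}"
    define x where "x = (1/R) *\<^sub>R y"
    have "norm x \<le> 1" using y R by (simp add: x_def field_simps)
    moreover have "t * norm x \<le> x \<bullet> u" using y R
      by (simp add: x_def field_simps)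
    moreover have "y = R *\<^sub>R x" using R by (simp add: x_def)
    ultimately show "y \<in> (*\<^sub>R) R ` (cball 0 1 \<inter> {x. t * norm x \<le> x \<bullet> u})" by auto
  qed
  have "measure lebesgue ((*\<^sub>R) R ` (cball 0 1 \<inter> {x. t * norm x \<le> x \<bullet> u}))
        = \<bar>det (matrix ((*\<^sub>R) R) :: real^'n^'n)\<bar> * measure lebesgue (cball 0 1 \<inter> {x::real^'n. t * norm x \<le> x \<bullet> u})"
    by (rule measure_linear_image_gen[OF _ cone_lmeasurable]) (simp add: linear_scaleR)
  then show ?thesis using img R by simp
qed

lemma shell_cone:
  fixes u :: "real^'n"
  assumes u: "norm u = 1" and d: "0 < d" and a: "0 < a" "a \<le> b" and db: "d < b"
  shows "measure lebesgue ({x. a < norm x \<and> norm x \<le> b} \<inter> {x. d \<le> x \<bullet> u})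
       \<le> unit_ball_vol (CARD('n)) * sqrt (1 - (d/b)^2) ^ (CARD('n) - 1) * (b ^ CARD('n) - a ^ CARD('n))"
proof -
  define t where "t = d / b"
  have b0: "b > 0" using a by simp
  have t: "0 \<le> t" "t < 1" using d db b0 by (auto simp: t_def)
  define K where "K = {x::real^'n. t * norm x \<le> x \<bullet> u}"
  define \<kappa> where "\<kappa> = measure lebesgue (cball 0 1 \<inter> K)"
  have sub: "{x. a < norm x \<and> norm x \<le> b} \<inter> {x. d \<le> x \<bullet> u} \<subseteq> (cball 0 b \<inter> K) - (cball 0 a \<inter> K)"
  proof
    fix x :: "real^'n" assume x: "x \<in> {x. a < norm x \<and> norm x \<le> b} \<inter> {x. d \<le> x \<bullet> u}"
    have "t * norm x \<le> t * b" using x t by (intro mult_left_mono) auto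
    also have "t * b = d" using b0 by (simp add: t_def)
    finally show "x \<in> (cball 0 b \<inter> K) - (cball 0 a \<inter> K)" using x by (auto simp: K_def)
  qed
  have m1: "cball 0 b \<inter> K \<in> lmeasurable" "cball 0 a \<inter> K \<in> lmeasurable"
    unfolding K_def by (rule cone_lmeasurable)+
  have Xm: "{x. a < norm x \<and> norm x \<le> b} \<inter> {x::real^'n. d \<le> x \<bullet> u} \<in> sets lebesgue"
  proof -
    have "{x. a < norm x \<and> norm x \<le> b} \<inter> {x::real^'n. d \<le> x \<bullet> u} \<in> sets borel" by measurable
    then show ?thesis by simp
  qed
  have "measure lebesgue ({x. a < norm x \<and> norm x \<le> b} \<inter> {x. d \<le> x \<bullet> u})
        \<le> measure lebesgue ((cball 0 b \<inter> K) - (cball 0 a \<inter> K))"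
    using sub m1 Xm by (intro measure_mono_fmeasurable) auto
  also have "\<dots> = measure lebesgue (cball 0 b \<inter> K) - measure lebesgue (cball 0 a \<inter> K)"
  proof -
    have f1: "emeasure lebesgue (cball 0 b \<inter> K) \<noteq> \<infinity>"
      using fmeasurableD2[OF m1(1)] by simp
    show ?thesis using m1 a by (intro measure_Diff[OF f1] fmeasurableD) auto
  qed
  also have "\<dots> = (b ^ CARD('n) - a ^ CARD('n)) * \<kappa>"
    unfolding \<kappa>_def K_def using cone_scale[of b t u] cone_scale[of a t u] a b0 by (simp add: algebra_simps)
  also have "\<dots> \<le> (b ^ CARD('n) - a ^ CARD('n)) * (unit_ball_vol (CARD('n)) * sqrt (1 - t^2) ^ (CARD('n) - 1))"
    unfolding \<kappa>_def K_def using kappa_bound[OF u t] a by (intro mult_left_mono) (auto intro: power_mono)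
  finally show ?thesis by (simp add: t_def algebra_simps)
qed

lemma shell_measure:
  assumes "0 \<le> a" "a \<le> b"
  shows "measure lebesgue {x::real^'n. a < norm x \<and> norm x \<le> b} = unit_ball_vol (CARD('n)) * (b ^ CARD('n) - a ^ CARD('n))"
proof -
  have eq: "{x::real^'n. a < norm x \<and> norm x \<le> b} = cball 0 b - cball 0 a" by auto
  have "measure lebesgue (cball (0::real^'n) b - cball 0 a) = measure lebesgue (cball (0::real^'n) b) - measure lebesgue (cball (0::real^'n) a)"
  proof -
    have f1: "emeasure lebesgue (cball (0::real^'n) b) \<noteq> \<infinity>"
      using fmeasurableD2[OF lmeasurable_cball] by simp
    show ?thesis using assms by (intro measure_Diff[OF f1] fmeasurableD lmeasurable_cball) auto
  qed
  then show ?thesis unfolding eq using assms measure_lebesgue_cball[of a, where 'n='n] measure_lebesgue_cball[of b, where 'n='n]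
    by (simp only:) (simp add: algebra_simps)
qed

lemma emeasure_lborel_eq_lebesgue:
  fixes S :: "(real^'n) set"
  assumes "S \<in> sets borel" "bounded S"
  shows "emeasure lborel S = ennreal (measure lebesgue S)"
proof -
  have "emeasure lborel S = emeasure lebesgue S" using assms by (simp add: emeasure_completion)
  also have "\<dots> = ennreal (measure lebesgue S)"
    using assms emeasure_bounded_finite[of S] by (intro emeasure_eq_ennreal_measure) (simp add: less_top)
  finally show ?thesis .
qed





lemma indicator_two:
  fixes d A B \<rho> :: real assumes "d \<le> A" "A \<le> B"
  shows "indicator {d<..A} \<rho> + indicator {A<..B} \<rho> = (indicator {d<..B} \<rho> :: ennreal)"
  using assms by (auto simp: indicator_def)

lemma indicator_shells:
  fixes h d :: real assumes h: "h \<ge> 0"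
  shows "(\<Sum>k<N. indicator {d + real k * h <.. d + real (Suc k) * h} \<rho> :: ennreal)
          = indicator {d <.. d + real N * h} \<rho>"
proof (induction N)
  case 0 then show ?case by (simp add: indicator_def)
next
  case (Suc N)
  have le: "d + real N * h \<le> d + real (Suc N) * h" using h by (simp add: algebra_simps)
  have "(\<Sum>k<Suc N. indicator {d + real k * h <.. d + real (Suc k) * h} \<rho> :: ennreal)
      = indicator {d <.. d + real N * h} \<rho> + indicator {d + real N * h <.. d + real (Suc N) * h} \<rho>"
    using Suc by simp
  also have "\<dots> = indicator {d <.. d + real (Suc N) * h} \<rho>"
    using le h by (intro indicator_two) auto
  finally show ?case .
qed

lemma tele_ineq:
  fixes G C D :: "nat \<Rightarrow> real" and \<delta> :: real
  assumes G0: "\<And>k. k \<le> N \<Longrightarrow> 0 \<le> G k" and Gle: "\<And>k. k \<le> N \<Longrightarrow> G k \<le> G 0"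
    and Gm: "\<And>k. k < N \<Longrightarrow> G (Suc k) \<le> G k"
    and C01: "\<And>k. k \<le> N \<Longrightarrow> 0 \<le> C k \<and> C k \<le> 1" and Cm: "\<And>k. k < N \<Longrightarrow> C k \<le> C (Suc k)"
    and D: "\<And>k. k < N \<Longrightarrow> 0 \<le> D k \<and> D k \<le> \<delta>" and \<delta>: "0 \<le> \<delta>"
  shows "(\<Sum>k<N. G k * C (Suc k) * D k) \<le> (\<Sum>k<N. G (Suc k) * C k * D k) + 2 * G 0 * \<delta>"
proof -
  have trm: "G k * C (Suc k) * D k - G (Suc k) * C k * D k \<le> (G 0 * (C (Suc k) - C k) + (G k - G (Suc k))) * \<delta>"
    if k: "k < N" for k
  proof -
    define e where "e = G k * (C (Suc k) - C k) + C k * (G k - G (Suc k))"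
    have a1: "0 \<le> G k * (C (Suc k) - C k)" using G0[of k] Cm[OF k] k by simp
    have a2: "0 \<le> C k * (G k - G (Suc k))" using C01[of k] Gm[OF k] k by simp
    have e0: "0 \<le> e" using a1 a2 unfolding e_def by linarith
    have b1: "G k * (C (Suc k) - C k) \<le> G 0 * (C (Suc k) - C k)"
      using Gle[of k] Cm[OF k] k by (intro mult_right_mono) auto
    have b2: "C k * (G k - G (Suc k)) \<le> 1 * (G k - G (Suc k))"
      using C01[of k] Gm[OF k] k by (intro mult_right_mono) auto
    have "G k * C (Suc k) * D k - G (Suc k) * C k * D k = e * D k" unfolding e_def by (simp add: algebra_simps)
    also have "\<dots> \<le> e * \<delta>" using D[OF k] e0 by (intro mult_left_mono) auto
    also have "\<dots> \<le> (G 0 * (C (Suc k) - C k) + (G k - G (Suc k))) * \<delta>"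
      using b1 b2 \<delta> unfolding e_def by (intro mult_right_mono) auto
    finally show ?thesis .
  qed
  have "(\<Sum>k<N. G k * C (Suc k) * D k) - (\<Sum>k<N. G (Suc k) * C k * D k)
        = (\<Sum>k<N. G k * C (Suc k) * D k - G (Suc k) * C k * D k)" by (simp add: sum_subtractf)
  also have "\<dots> \<le> (\<Sum>k<N. (G 0 * (C (Suc k) - C k) + (G k - G (Suc k))) * \<delta>)"
    by (intro sum_mono trm) simp
  also have "\<dots> = (G 0 * (\<Sum>k<N. C (Suc k) - C k) + (\<Sum>k<N. G k - G (Suc k))) * \<delta>"
    by (simp only: sum_distrib_right[symmetric] sum.distrib sum_distrib_left[symmetric])
  also have "(\<Sum>k<N. C (Suc k) - C k) = C N - C 0" by (rule sum_lessThan_telescope)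
  also have "(\<Sum>k<N. G k - G (Suc k)) = G 0 - G N" by (rule sum_lessThan_telescope')
  also have "(G 0 * (C N - C 0) + (G 0 - G N)) * \<delta> \<le> (2 * G 0) * \<delta>"
  proof (rule mult_right_mono[OF _ \<delta>])
    have "G 0 * (C N - C 0) \<le> G 0 * 1" using C01[of N] C01[of 0] G0[of 0] by (intro mult_left_mono) auto
    then show "G 0 * (C N - C 0) + (G 0 - G N) \<le> 2 * G 0" using G0[of N] by simp
  qed
  finally show ?thesis by simp
qed

lemma pow_diff_bound:
  fixes a b r :: real
  assumes "0 \<le> a" "a \<le> b" "b \<le> r"
  shows "b ^ n - a ^ n \<le> real n * r ^ (n - 1) * (b - a)"
proof -
  have "b ^ n - a ^ n = (b - a) * (\<Sum>i<n. a ^ (n - Suc i) * b ^ i)" by (rule power_diff_sumr2)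
  also have "(\<Sum>i<n. a ^ (n - Suc i) * b ^ i) \<le> (\<Sum>i<n. r ^ (n - 1))"
  proof (intro sum_mono)
    fix i assume i: "i \<in> {..<n}"
    have "a ^ (n - Suc i) * b ^ i \<le> r ^ (n - Suc i) * r ^ i"
      using assms by (intro mult_mono power_mono) auto
    also have "\<dots> = r ^ (n - 1)" using i by (simp add: power_add[symmetric])
    finally show "a ^ (n - Suc i) * b ^ i \<le> r ^ (n - 1)" .
  qed
  then have "(b - a) * (\<Sum>i<n. a ^ (n - Suc i) * b ^ i) \<le> (b - a) * (\<Sum>i<n. r ^ (n - 1))"
    using assms by (intro mult_left_mono) auto
  finally show ?thesis by (simp add: algebra_simps)
qed

definition cfun :: "real \<Rightarrow> real \<Rightarrow> real \<Rightarrow> real" where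
  "cfun d e \<rho> = (1 - (d / \<rho>)^2) powr e"

lemma cfun_base:
  fixes d \<rho> :: real
  assumes "0 < d" "d \<le> \<rho>" shows "0 \<le> 1 - (d/\<rho>)^2" "1 - (d/\<rho>)^2 \<le> 1"
proof -
  have "\<rho> > 0" using assms by simp
  then have q1: "d / \<rho> \<le> 1" using assms by (simp add: divide_le_eq_1_pos)
  have q2: "0 \<le> d/\<rho>" using assms by simp
  have "(d/\<rho>)^2 \<le> 1" using q1 q2 by (simp add: power_le_one)
  then show "0 \<le> 1 - (d/\<rho>)^2" by simp
  show "1 - (d/\<rho>)^2 \<le> 1" by simp
qed

lemma cfun_01:
  assumes "0 < d" "d \<le> \<rho>" "0 \<le> e" shows "0 \<le> cfun d e \<rho>" "cfun d e \<rho> \<le> 1"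
proof -
  show "0 \<le> cfun d e \<rho>" unfolding cfun_def by simp
  have "cfun d e \<rho> \<le> 1 powr e" unfolding cfun_def using cfun_base[OF assms(1,2)] assms(3)
    by (intro powr_mono2) auto
  then show "cfun d e \<rho> \<le> 1" by simp
qed

lemma cfun_mono:
  assumes "0 < d" "d \<le> \<rho>1" "\<rho>1 \<le> \<rho>2" "0 \<le> e" shows "cfun d e \<rho>1 \<le> cfun d e \<rho>2"
proof -
  have "d / \<rho>2 \<le> d / \<rho>1" using assms by (intro divide_left_mono) auto
  then have "(d / \<rho>2)^2 \<le> (d / \<rho>1)^2" using assms by (intro power_mono) auto
  then show ?thesis unfolding cfun_def using cfun_base[OF assms(1,2)] assms(4)
    by (intro powr_mono2) auto
qed

lemma cfun_sqrt:
  assumes "0 < d" "d < \<rho>" "1 \<le> n"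
  shows "cfun d ((real n - 1) / 2) \<rho> = sqrt (1 - (d/\<rho>)^2) ^ (n - 1)"
proof -
  define y where "y = 1 - (d/\<rho>)^2"
  have "d/\<rho> < 1" "0 < d/\<rho>" using assms by auto
  then have "(d/\<rho>)^2 < 1" by (simp add: power_less_one_iff)
  then have y: "y > 0" unfolding y_def by simp
  have "sqrt y ^ (n - 1) = (y powr (1/2)) ^ (n - 1)" using y by (simp add: powr_half_sqrt)
  also have "\<dots> = (y powr (1/2)) powr (real (n - 1))" using y by (simp add: powr_realpow)
  also have "\<dots> = y powr (real (n - 1) / 2)" by (simp add: powr_powr)
  also have "real (n - 1) = real n - 1" using assms by simp
  finally show ?thesis unfolding cfun_def y_def by simp
qed





lemma Au_ae:
  fixes u :: "real^'n"
  assumes u: "norm u = 1" and d: "0 < d" and x: "d \<le> x \<bullet> u" "norm x \<le> d"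
  shows "x = d *\<^sub>R u"
proof -
  have uu: "u \<bullet> u = 1" using u by (simp add: dot_square_norm)
  have xx: "x \<bullet> x \<le> d^2" using x d by (simp add: dot_square_norm power_mono)
  have "(x - d *\<^sub>R u) \<bullet> (x - d *\<^sub>R u) = x \<bullet> x - 2 * d * (x \<bullet> u) + d^2"
    using uu by (simp add: inner_diff_left inner_diff_right inner_commute power2_eq_square algebra_simps)
  also have "\<dots> \<le> 0"
  proof -
    have "2 * d * d \<le> 2 * d * (x \<bullet> u)" using x d by (intro mult_left_mono) auto
    then show ?thesis using xx by (simp add: power2_eq_square)
  qed
  finally have "(x - d *\<^sub>R u) \<bullet> (x - d *\<^sub>R u) = 0" by (meson antisym inner_ge_zero)
  then show ?thesis by simp
qed

lemma core_ineq:
  fixes G :: "real \<Rightarrow> real" and u :: "real^'n" and d r :: real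
  assumes G0: "\<And>s. 0 \<le> G s" and Gm: "\<And>s t. 0 \<le> s \<Longrightarrow> s \<le> t \<Longrightarrow> G t \<le> G s"
    and Gmeas: "(\<lambda>x::real^'n. ennreal (G (norm x))) \<in> borel_measurable borel"
    and u: "norm u = 1" and d: "0 < d" and dr: "d \<le> r"
  shows "(\<integral>\<^sup>+x. ennreal (G (norm x)) * indicator {x. norm x \<le> r \<and> d \<le> x \<bullet> u} x \<partial>lborel)
     \<le> (\<integral>\<^sup>+(x::real^'n). ennreal (G (norm x)) * ennreal (indicator {d..r} (norm x) * cfun d ((real CARD('n) - 1)/2) (norm x)) \<partial>lborel)"
  (is "?L \<le> ?R")
proof -
  define n where "n = CARD('n)"
  define e where "e = (real n - 1) / 2"
  have n1: "1 \<le> n" unfolding n_def by (simp add: Suc_leI)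
  have e0: "0 \<le> e" using n1 unfolding e_def by simp
  define \<omega> where "\<omega> = unit_ball_vol (real n)"
  have \<omega>0: "0 \<le> \<omega>" unfolding \<omega>_def by simp
  define A' where "A' = {x::real^'n. d < norm x \<and> norm x \<le> r \<and> d \<le> x \<bullet> u}"
  have LA': "?L = (\<integral>\<^sup>+x. ennreal (G (norm x)) * indicator A' x \<partial>lborel)"
  proof (rule nn_integral_cong_AE)
    have "AE x in lborel. x \<notin> {d *\<^sub>R u}"
      by (rule AE_not_in) (simp add: finite_imp_null_set_lborel)
    then show "AE x in lborel. ennreal (G (norm x)) * indicator {x. norm x \<le> r \<and> d \<le> x \<bullet> u} x =
                 ennreal (G (norm x)) * indicator A' x"
    proof eventually_elim
      case (elim x)
      have "x \<in> {x. norm x \<le> r \<and> d \<le> x \<bullet> u} \<longleftrightarrow> x \<in> A'"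
        using Au_ae[OF u d, of x] elim unfolding A'_def by force
      then show ?case by (simp add: indicator_def)
    qed
  qed
  have Gmeas': "(\<lambda>x::real^'n. ennreal (G (norm x))) \<in> borel_measurable lborel"
    using Gmeas by simp
  have cmeas: "(\<lambda>\<rho>. cfun d e \<rho>) \<in> borel_measurable borel" unfolding cfun_def by measurable
  have main: "(\<integral>\<^sup>+x. ennreal (G (norm x)) * indicator A' x \<partial>lborel) \<le> ?R"
  proof (cases "d = r")
    case True
    then have "A' = {}" unfolding A'_def by auto
    then show ?thesis by simp
  next
    case False
    then have dr': "d < r" using dr by simp
    show ?thesis
    proof (rule ennreal_le_epsilon)
      fix \<epsilon> :: real assume "?R < top" and \<epsilon>: "0 < \<epsilon>"
      define K where "K = \<omega> * 2 * G d * (real n * r ^ (n - 1) * (r - d))"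
      have K0: "0 \<le> K" unfolding K_def using \<omega>0 G0[of d] dr d by (intro mult_nonneg_nonneg) auto
      obtain N0 :: nat where N0: "K / \<epsilon> < real N0" using reals_Archimedean2 by blast
      define N where "N = Suc N0"
      have N1: "real N \<ge> 1" "real N > 0" unfolding N_def by auto
      have KN: "K / real N \<le> \<epsilon>"
      proof -
        have "K / \<epsilon> < real N" using N0 unfolding N_def by simp
        then have "K < \<epsilon> * real N" using \<epsilon> by (simp add: divide_less_eq mult.commute)
        then show ?thesis using N1 by (simp add: divide_le_eq mult.commute)
      qed
      define h where "h = (r - d) / real N"
      have h0: "0 < h" unfolding h_def using dr' N1 by simp
      define a where "a = (\<lambda>k::nat. d + real k * h)"
      have a0: "a 0 = d" unfolding a_def by simp
      have aN: "a N = r" unfolding a_def h_def using N1 by simp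
      have aSuc: "a (Suc k) = a k + h" for k unfolding a_def by (simp add: algebra_simps)
      have ad: "d \<le> a k" for k unfolding a_def using h0 by simp
      have adS: "d < a (Suc k)" for k unfolding a_def using h0 by (simp add: add_pos_pos)
      have ar: "k \<le> N \<Longrightarrow> a k \<le> r" for k
      proof -
        assume "k \<le> N"
        then have "real k * h \<le> real N * h" using h0 by (intro mult_right_mono) auto
        then show "a k \<le> r" using aN unfolding a_def by simp
      qed
      define S where "S = (\<lambda>k. {x::real^'n. a k < norm x \<and> norm x \<le> a (Suc k)})"
      define H where "H = {x::real^'n. d \<le> x \<bullet> u}"
      define C where "C = (\<lambda>k. cfun d e (a k))"
      define D where "D = (\<lambda>k. a (Suc k) ^ n - a k ^ n)"
      define \<delta> where "\<delta> = real n * r ^ (n - 1) * h"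
      have Smeas: "S k \<in> sets borel" for k unfolding S_def by measurable
      have Hmeas: "H \<in> sets borel" unfolding H_def by measurable
      have Sind: "indicator (S k) x = (indicator {a k<..a (Suc k)} (norm x) :: ennreal)" for k x
        unfolding S_def by (simp add: indicator_def)
      have shells: "(\<Sum>k<N. indicator {a k<..a (Suc k)} \<rho> :: ennreal) = indicator {d<..r} \<rho>" for \<rho>
        using indicator_shells[where h=h and N=N and d=d and \<rho>=\<rho>] h0 aN unfolding a_def by simp
      (* step i *)
      have stepi: "(\<integral>\<^sup>+x. ennreal (G (norm x)) * indicator A' x \<partial>lborel)
          \<le> (\<Sum>k<N. ennreal (G (a k)) * emeasure lborel (S k \<inter> H))"
      proof -
        have pw: "ennreal (G (norm x)) * indicator A' x \<le> (\<Sum>k<N. ennreal (G (a k)) * indicator (S k \<inter> H) x)" for x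
        proof (cases "x \<in> A'")
          case False then show ?thesis by simp
        next
          case True
          then have xr: "d < norm x" "norm x \<le> r" "x \<in> H" unfolding A'_def H_def by auto
          have "(\<Sum>k<N. indicator {a k<..a (Suc k)} (norm x) :: ennreal) = 1"
            using shells[of "norm x"] xr by simp
          then obtain k where k: "k < N" "indicator {a k<..a (Suc k)} (norm x) \<noteq> (0::ennreal)"
            by (metis (no_types, lifting) sum.neutral zero_neq_one lessThan_iff)
          then have xk: "a k < norm x" "norm x \<le> a (Suc k)" by (auto simp: indicator_def split: if_splits)
          have "ennreal (G (norm x)) * indicator A' x = ennreal (G (norm x))" using True by simp
          also have "\<dots> \<le> ennreal (G (a k))"
            using Gm[of "a k" "norm x"] ad[of k] d xk by (intro ennreal_leI) auto
          also have "\<dots> = ennreal (G (a k)) * indicator (S k \<inter> H) x"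
            using xk xr unfolding S_def by simp
          also have "\<dots> \<le> (\<Sum>k<N. ennreal (G (a k)) * indicator (S k \<inter> H) x)"
            using k by (intro member_le_sum) auto
          finally show ?thesis .
        qed
        have "(\<integral>\<^sup>+x. ennreal (G (norm x)) * indicator A' x \<partial>lborel)
            \<le> (\<integral>\<^sup>+x. (\<Sum>k<N. ennreal (G (a k)) * indicator (S k \<inter> H) x) \<partial>lborel)"
          by (intro nn_integral_mono pw)
        also have "\<dots> = (\<Sum>k<N. (\<integral>\<^sup>+x. ennreal (G (a k)) * indicator (S k \<inter> H) x \<partial>lborel))"
          using Smeas Hmeas by (intro nn_integral_sum) simp
        also have "\<dots> = (\<Sum>k<N. ennreal (G (a k)) * emeasure lborel (S k \<inter> H))"
          using Smeas Hmeas by (intro sum.cong refl nn_integral_cmult_indicator) simp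
        finally show ?thesis .
      qed
      have stepi': "emeasure lborel (S k \<inter> H) \<le> ennreal (\<omega> * C (Suc k) * D k)" if "k < N" for k
      proof -
        have "emeasure lborel (S k \<inter> H) = ennreal (measure lebesgue (S k \<inter> H))"
          using Smeas Hmeas by (intro emeasure_lborel_eq_lebesgue) (auto simp: S_def bounded_iff)
        also have "measure lebesgue (S k \<inter> H) \<le> \<omega> * C (Suc k) * D k"
        proof -
          have "measure lebesgue (S k \<inter> H) \<le> unit_ball_vol (CARD('n)) * sqrt (1 - (d/a (Suc k))^2) ^ (CARD('n) - 1) * (a (Suc k) ^ CARD('n) - a k ^ CARD('n))"
            unfolding S_def H_def using shell_cone[OF u d, of "a k" "a (Suc k)"] ad[of k] d adS[of k] aSuc[of k] h0 by simp
          also have "sqrt (1 - (d/a (Suc k))^2) ^ (CARD('n) - 1) = C (Suc k)"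
            unfolding C_def e_def n_def using cfun_sqrt[OF d adS[of k], of "CARD('n)"] n1 n_def by simp
          finally show ?thesis unfolding \<omega>_def D_def n_def by (simp add: algebra_simps)
        qed
        then have "ennreal (measure lebesgue (S k \<inter> H)) \<le> ennreal (\<omega> * C (Suc k) * D k)" by (rule ennreal_leI)
        finally show ?thesis .
      qed
      have Dnn: "0 \<le> D k" for k unfolding D_def using ad[of k] d aSuc[of k] h0 by (intro diff_ge_0_iff_ge[THEN iffD2] power_mono) auto
      have Cnn: "0 \<le> C k" "C k \<le> 1" for k unfolding C_def using cfun_01[OF d ad[of k] e0] by auto
      have stepii: "(\<Sum>k<N. ennreal (G (a (Suc k)) * C k) * emeasure lborel (S k)) \<le> ?R"
      proof -
        define F where "F = (\<lambda>x::real^'n. ennreal (G (norm x)) * ennreal (indicator {d..r} (norm x) * cfun d ((real CARD('n) - 1)/2) (norm x)))"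
        have trm: "ennreal (G (a (Suc k)) * C k) * indicator (S k) x \<le> F x * indicator (S k) x" if k: "k < N" for k x
        proof (cases "x \<in> S k")
          case False then show ?thesis by simp
        next
          case True
          then have xk: "a k < norm x" "norm x \<le> a (Suc k)" unfolding S_def by auto
          have xr: "norm x \<le> r" using xk ar[of "Suc k"] k by simp
          have xd: "d \<le> norm x" using xk ad[of k] by simp
          have g1: "G (a (Suc k)) \<le> G (norm x)" using Gm[of "norm x" "a (Suc k)"] xk by simp
          have c1: "C k \<le> cfun d e (norm x)" unfolding C_def using cfun_mono[OF d ad[of k] _ e0, of "norm x"] xk by simp
          have "ennreal (G (a (Suc k)) * C k) \<le> ennreal (G (norm x) * cfun d e (norm x))"
            using g1 c1 Cnn[of k] G0[of "a (Suc k)"] by (intro ennreal_leI mult_mono) auto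
          also have "\<dots> = F x" unfolding F_def e_def n_def using xr xd G0[of "norm x"]
            by (simp add: ennreal_mult')
          finally show ?thesis using True by simp
        qed
        have pw: "(\<Sum>k<N. ennreal (G (a (Suc k)) * C k) * indicator (S k) x) \<le> F x" for x
        proof -
          have "(\<Sum>k<N. ennreal (G (a (Suc k)) * C k) * indicator (S k) x) \<le> (\<Sum>k<N. F x * indicator (S k) x)"
            by (intro sum_mono trm) simp
          also have "\<dots> = F x * (\<Sum>k<N. indicator {a k<..a (Suc k)} (norm x))"
            by (simp add: sum_distrib_left Sind)
          also have "\<dots> = F x * indicator {d<..r} (norm x)" using shells by simp
          also have "\<dots> \<le> F x" by (simp add: indicator_def)
          finally show ?thesis .
        qed
        have "(\<Sum>k<N. ennreal (G (a (Suc k)) * C k) * emeasure lborel (S k))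
            = (\<Sum>k<N. (\<integral>\<^sup>+x. ennreal (G (a (Suc k)) * C k) * indicator (S k) x \<partial>lborel))"
          using Smeas by (intro sum.cong refl nn_integral_cmult_indicator[symmetric]) simp
        also have "\<dots> = (\<integral>\<^sup>+x. (\<Sum>k<N. ennreal (G (a (Suc k)) * C k) * indicator (S k) x) \<partial>lborel)"
          using Smeas by (intro nn_integral_sum[symmetric]) simp
        also have "\<dots> \<le> (\<integral>\<^sup>+x. F x \<partial>lborel)" by (intro nn_integral_mono pw)
        finally show ?thesis by (simp add: F_def)
      qed
      have Smeasure: "emeasure lborel (S k) = ennreal (\<omega> * D k)" for k
      proof -
        have "emeasure lborel (S k) = ennreal (measure lebesgue (S k))"
          using Smeas by (intro emeasure_lborel_eq_lebesgue) (auto simp: S_def bounded_iff)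
        also have "measure lebesgue (S k) = \<omega> * D k"
          unfolding S_def \<omega>_def D_def n_def using shell_measure[of "a k" "a (Suc k)"] ad[of k] d aSuc[of k] h0 by simp
        finally show ?thesis .
      qed
      have stepiii: "(\<Sum>k<N. G (a k) * (\<omega> * C (Suc k) * D k)) \<le> (\<Sum>k<N. (G (a (Suc k)) * C k) * (\<omega> * D k)) + K / real N"
      proof -
        have tele: "(\<Sum>k<N. G (a k) * C (Suc k) * D k) \<le> (\<Sum>k<N. G (a (Suc k)) * C k * D k) + 2 * G (a 0) * \<delta>"
        proof (rule tele_ineq)
          show "0 \<le> G (a k)" for k by (rule G0)
          show "G (a k) \<le> G (a 0)" for k using Gm[of "a 0" "a k"] ad[of k] a0 d by simp
          show "G (a (Suc k)) \<le> G (a k)" for k using Gm[of "a k" "a (Suc k)"] ad[of k] d aSuc[of k] h0 by simp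
          show "0 \<le> C k \<and> C k \<le> 1" for k using Cnn[of k] by simp
          show "C k \<le> C (Suc k)" for k unfolding C_def using cfun_mono[OF d ad[of k] _ e0, of "a (Suc k)"] aSuc[of k] h0 by simp
          show "0 \<le> D k \<and> D k \<le> \<delta>" if "k < N" for k
          proof -
            have "D k \<le> real n * r ^ (n - 1) * (a (Suc k) - a k)"
              unfolding D_def using pow_diff_bound[of "a k" "a (Suc k)" r n] ad[of k] d aSuc[of k] h0 ar[of "Suc k"] that by simp
            then show ?thesis using Dnn[of k] aSuc[of k] unfolding \<delta>_def by simp
          qed
          show "0 \<le> \<delta>" unfolding \<delta>_def using h0 d dr by simp
        qed
        have "(\<Sum>k<N. G (a k) * (\<omega> * C (Suc k) * D k)) = \<omega> * (\<Sum>k<N. G (a k) * C (Suc k) * D k)"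
          by (simp add: sum_distrib_left algebra_simps)
        also have "\<dots> \<le> \<omega> * ((\<Sum>k<N. G (a (Suc k)) * C k * D k) + 2 * G (a 0) * \<delta>)"
          using tele \<omega>0 by (rule mult_left_mono)
        also have "\<dots> = (\<Sum>k<N. (G (a (Suc k)) * C k) * (\<omega> * D k)) + K / real N"
          unfolding K_def \<delta>_def h_def a0 by (simp add: sum_distrib_left algebra_simps)
        finally show ?thesis .
      qed
      have nn1: "0 \<le> G (a k) * (\<omega> * C (Suc k) * D k)" for k using G0[of "a k"] \<omega>0 Cnn[of "Suc k"] Dnn[of k] by simp
      have nn2: "0 \<le> (G (a (Suc k)) * C k) * (\<omega> * D k)" for k using G0[of "a (Suc k)"] \<omega>0 Cnn[of k] Dnn[of k] by simp
      have KN0: "0 \<le> K / real N" using K0 N1 by simp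
      have "(\<integral>\<^sup>+x. ennreal (G (norm x)) * indicator A' x \<partial>lborel)
          \<le> (\<Sum>k<N. ennreal (G (a k)) * emeasure lborel (S k \<inter> H))" by (rule stepi)
      also have "\<dots> \<le> (\<Sum>k<N. ennreal (G (a k)) * ennreal (\<omega> * C (Suc k) * D k))"
        by (intro sum_mono mult_left_mono stepi') auto
      also have "\<dots> = ennreal (\<Sum>k<N. G (a k) * (\<omega> * C (Suc k) * D k))"
        using nn1 G0 by (simp add: ennreal_mult' flip: sum_ennreal)
      also have "\<dots> \<le> ennreal ((\<Sum>k<N. (G (a (Suc k)) * C k) * (\<omega> * D k)) + K / real N)"
        by (rule ennreal_leI[OF stepiii])
      also have "\<dots> = ennreal (\<Sum>k<N. (G (a (Suc k)) * C k) * (\<omega> * D k)) + ennreal (K / real N)"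
        using nn2 KN0 by (intro ennreal_plus) (auto intro: sum_nonneg)
      also have "ennreal (\<Sum>k<N. (G (a (Suc k)) * C k) * (\<omega> * D k)) = (\<Sum>k<N. ennreal (G (a (Suc k)) * C k) * emeasure lborel (S k))"
        using nn2 G0 Cnn by (simp add: Smeasure ennreal_mult' flip: sum_ennreal)
      also have "ennreal (K / real N) \<le> ennreal \<epsilon>" using KN by (rule ennreal_leI)
      finally show "(\<integral>\<^sup>+x. ennreal (G (norm x)) * indicator A' x \<partial>lborel) \<le> ?R + ennreal \<epsilon>"
        using stepii by (meson add_right_mono order_trans add_left_mono)
    qed
  qed
  show ?thesis using LA' main by simp
qed


lemma f_integrable:
  fixes M :: "'a measure" and X :: "'a \<Rightarrow> real"
  assumes prob: "prob_space M" and f_dens: "distributed M lborel X (\<lambda>\<rho>. ennreal (f \<rho>))"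
    and f_nonneg: "\<forall>\<rho>. 0 \<le> f \<rho>"
  shows "integrable lborel f"
proof -
  interpret prob_space M by (rule prob)
  have fm: "f \<in> borel_measurable lborel"
    using distributed_real_measurable[of lborel f M X] f_dens f_nonneg by simp
  have "emeasure M (X -` UNIV \<inter> space M) = (\<integral>\<^sup>+x. ennreal (f x) * indicator UNIV x \<partial>lborel)"
    by (rule distributed_emeasure[OF f_dens]) simp
  then have "(\<integral>\<^sup>+x. ennreal (f x) \<partial>lborel) = 1" by (simp add: emeasure_space_1)
  then show ?thesis using fm f_nonneg by (intro integrableI_nonneg) auto
qed

lemma core_prob:
  fixes M :: "'a measure" and z :: "'a \<Rightarrow> real^'n" and g f :: "real \<Rightarrow> real" and u :: "real^'n" and d r :: real
  assumes prob: "prob_space M"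
    and noise: "distributed M lborel z (\<lambda>x. ennreal (g (norm x)))"
    and g_noninc: "\<forall>s t. 0 \<le> s \<longrightarrow> s \<le> t \<longrightarrow> g t \<le> g s"
    and f_dens: "distributed M lborel (\<lambda>\<omega>. norm (z \<omega>)) (\<lambda>\<rho>. ennreal (f \<rho>))"
    and f_nonneg: "\<forall>\<rho>. 0 \<le> f \<rho>"
    and u: "norm u = 1" and d: "0 < d" and dr: "d \<le> r"
  shows "measure M {\<omega> \<in> space M. norm (z \<omega>) \<le> r \<and> d \<le> z \<omega> \<bullet> u}
     \<le> (LINT \<rho>:{d..r}|lborel. f \<rho> * cfun d ((real CARD('n) - 1)/2) \<rho>)"
proof -
  interpret prob_space M by (rule prob)
  define e where "e = (real CARD('n) - 1)/2"
  have e0: "0 \<le> e" unfolding e_def by (simp add: Suc_leI)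
  define G where "G = (\<lambda>\<rho>. max (g \<rho>) 0)"
  have gG: "ennreal (g \<rho>) = ennreal (G \<rho>)" for \<rho> unfolding G_def by (metis ennreal_max_0 max.commute)
  have G0: "0 \<le> G s" for s unfolding G_def by simp
  have Gm: "0 \<le> s \<Longrightarrow> s \<le> t \<Longrightarrow> G t \<le> G s" for s t unfolding G_def using g_noninc by (meson max.mono order_refl)
  have gmeas: "(\<lambda>x::real^'n. ennreal (g (norm x))) \<in> borel_measurable lborel"
    using distributed_borel_measurable[OF noise] .
  have Gmeas: "(\<lambda>x::real^'n. ennreal (G (norm x))) \<in> borel_measurable borel"
    using gmeas by (simp add: gG)
  have zm: "z \<in> measurable M lborel" using distributed_measurable[OF noise] .
  have fm: "f \<in> borel_measurable lborel"
    using distributed_real_measurable[of lborel f M] f_dens f_nonneg by simp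
  have cmeas: "(\<lambda>\<rho>. cfun d e \<rho>) \<in> borel_measurable borel" unfolding cfun_def by measurable
  define A where "A = {x::real^'n. norm x \<le> r \<and> d \<le> x \<bullet> u}"
  have Am: "A \<in> sets lborel" unfolding A_def by measurable
  define S where "S = {\<omega> \<in> space M. norm (z \<omega>) \<le> r \<and> d \<le> z \<omega> \<bullet> u}"
  have L: "emeasure M S = (\<integral>\<^sup>+x. ennreal (G (norm x)) * indicator A x \<partial>lborel)"
  proof -
    have "S = z -` A \<inter> space M" unfolding S_def A_def by auto
    then have "emeasure M S = (\<integral>\<^sup>+x. ennreal (g (norm x)) * indicator A x \<partial>lborel)"
      using distributed_emeasure[OF noise Am] by simp
    then show ?thesis by (simp add: gG)
  qed
  define h where "h = (\<lambda>\<rho>. ennreal (indicator {d..r} \<rho> * cfun d e \<rho>))"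
  have hm: "h \<in> borel_measurable lborel" unfolding h_def using cmeas by measurable
  have fint: "integrable lborel f" by (rule f_integrable[OF prob f_dens f_nonneg])
  have c01: "d \<le> \<rho> \<Longrightarrow> 0 \<le> cfun d e \<rho> \<and> cfun d e \<rho> \<le> 1" for \<rho> using cfun_01[OF d _ e0] by auto
  have Fint: "integrable lborel (\<lambda>\<rho>. indicator {d..r} \<rho> *\<^sub>R (f \<rho> * cfun d e \<rho>))"
  proof (rule Bochner_Integration.integrable_bound[OF fint])
    show "(\<lambda>\<rho>. indicator {d..r} \<rho> *\<^sub>R (f \<rho> * cfun d e \<rho>)) \<in> borel_measurable lborel"
      using fm cmeas by measurable
    show "AE x in lborel. norm (indicator {d..r} x *\<^sub>R (f x * cfun d e x)) \<le> norm (f x)"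
    proof (rule AE_I2)
      fix x show "norm (indicator {d..r} x *\<^sub>R (f x * cfun d e x)) \<le> norm (f x)"
        using c01[of x] f_nonneg by (auto simp: indicator_def abs_mult intro: mult_left_le)
    qed
  qed
  have R: "ennreal (LINT \<rho>:{d..r}|lborel. f \<rho> * cfun d e \<rho>)
      = (\<integral>\<^sup>+(x::real^'n). ennreal (G (norm x)) * h (norm x) \<partial>lborel)"
  proof -
    have "ennreal (LINT \<rho>:{d..r}|lborel. f \<rho> * cfun d e \<rho>)
        = (\<integral>\<^sup>+\<rho>. ennreal (indicator {d..r} \<rho> *\<^sub>R (f \<rho> * cfun d e \<rho>)) \<partial>lborel)"
      unfolding set_lebesgue_integral_def
      using c01 f_nonneg by (intro nn_integral_eq_integral[symmetric] Fint AE_I2) (auto simp: indicator_def)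
    also have "\<dots> = (\<integral>\<^sup>+\<rho>. ennreal (f \<rho>) * h \<rho> \<partial>lborel)"
      unfolding h_def using f_nonneg by (intro nn_integral_cong) (simp add: ennreal_mult' mult.left_commute)
    also have "\<dots> = (\<integral>\<^sup>+\<omega>. h (norm (z \<omega>)) \<partial>M)"
      by (rule distributed_nn_integral[OF f_dens hm])
    also have "\<dots> = (\<integral>\<^sup>+(x::real^'n). ennreal (g (norm x)) * h (norm x) \<partial>lborel)"
    proof (intro distributed_nn_integral[OF noise, symmetric])
      have hm'[measurable]: "h \<in> borel_measurable borel" using hm by simp
      show "(\<lambda>x::real^'n. h (norm x)) \<in> borel_measurable lborel" by measurable
    qed
    finally show ?thesis by (simp add: gG)
  qed
  have "emeasure M S = (\<integral>\<^sup>+x. ennreal (G (norm x)) * indicator A x \<partial>lborel)" by (rule L)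
  also have "\<dots> \<le> (\<integral>\<^sup>+(x::real^'n). ennreal (G (norm x)) * h (norm x) \<partial>lborel)"
    unfolding A_def h_def e_def by (rule core_ineq[OF G0 Gm Gmeas u d dr])
  also have "\<dots> = ennreal (LINT \<rho>:{d..r}|lborel. f \<rho> * cfun d e \<rho>)" by (rule R[symmetric])
  finally have "emeasure M S \<le> ennreal (LINT \<rho>:{d..r}|lborel. f \<rho> * cfun d e \<rho>)" .
  moreover have "0 \<le> (LINT \<rho>:{d..r}|lborel. f \<rho> * cfun d e \<rho>)"
    unfolding set_lebesgue_integral_def using c01 f_nonneg
    by (intro integral_nonneg_AE AE_I2) (auto simp: indicator_def)
  ultimately show ?thesis unfolding S_def e_def by (simp add: emeasure_eq_measure)
qed





lemma lattice_finite_ball: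
  fixes L :: "(real^'n) set"
  assumes "is_lattice L"
  shows "finite {v \<in> L. norm v \<le> R}"
proof -
  obtain B :: "real^'n^'n" where B: "invertible B"
    and L: "L = range (\<lambda>k :: int^'n. B *v (\<chi> i. real_of_int (k $ i)))"
    using assms unfolding is_lattice_def by blast
  obtain Bi where Bi: "Bi ** B = mat 1" using B unfolding invertible_def by blast
  obtain C where C: "C > 0" "\<And>x. norm (Bi *v x) \<le> C * norm x"
    using linear_bounded_pos[OF matrix_vector_mul_linear[of Bi]] by blast
  define m where "m = \<lceil>C * R\<rceil>"
  define K where "K = {k :: int^'n. \<forall>i. \<bar>k $ i\<bar> \<le> m}"
  have "K \<subseteq> vec_lambda ` (PiE UNIV (\<lambda>_. {-m..m}))"
  proof
    fix k assume "k \<in> K"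
    then have "(\<lambda>i. k $ i) \<in> PiE UNIV (\<lambda>_. {-m..m})" unfolding K_def by (simp add: PiE_iff abs_le_iff minus_le_iff)
    then show "k \<in> vec_lambda ` (PiE UNIV (\<lambda>_. {-m..m}))" by (metis image_eqI vec_lambda_eta)
  qed
  moreover have "finite (PiE (UNIV::'n set) (\<lambda>_. {-m..m}))" by (intro finite_PiE) auto
  ultimately have fK: "finite K" by (meson finite_imageI finite_subset)
  have "{v \<in> L. norm v \<le> R} \<subseteq> (\<lambda>k. B *v (\<chi> i. real_of_int (k $ i))) ` K"
  proof
    fix v assume v: "v \<in> {v \<in> L. norm v \<le> R}"
    then obtain k where k: "v = B *v (\<chi> i. real_of_int (k $ i))" using L by auto
    have "(\<chi> i. real_of_int (k $ i)) = Bi *v v" unfolding k by (simp add: matrix_vector_mul_assoc Bi)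
    then have "norm (\<chi> i. real_of_int (k $ i)) \<le> C * R"
      using C(2)[of v] v C(1) by (smt (verit) mem_Collect_eq mult_left_mono)
    then have "\<bar>k $ i\<bar> \<le> m" for i
    proof -
      assume h: "norm (\<chi> i. real_of_int (k $ i)) \<le> C * R"
      have "\<bar>real_of_int (k $ i)\<bar> \<le> C * R"
        using component_le_norm_cart[of "\<chi> i. real_of_int (k $ i)" i] h by simp
      then have "real_of_int \<bar>k $ i\<bar> \<le> C * R" by simp
      then show ?thesis unfolding m_def by (metis ceiling_mono ceiling_of_int)
    qed
    then have "k \<in> K" unfolding K_def by auto
    then show "v \<in> (\<lambda>k. B *v (\<chi> i. real_of_int (k $ i))) ` K" using k by blast
  qed
  then show ?thesis using fK by (meson finite_imageI finite_subset)
qed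

lemma lattice_unbounded:
  fixes L :: "(real^'n) set"
  assumes "is_lattice L"
  shows "\<exists>v\<in>L. v \<noteq> 0 \<and> a < norm v"
proof -
  obtain B :: "real^'n^'n" where B: "invertible B"
    and L: "L = range (\<lambda>k :: int^'n. B *v (\<chi> i. real_of_int (k $ i)))"
    using assms unfolding is_lattice_def by blast
  obtain Bi where Bi: "Bi ** B = mat 1" using B unfolding invertible_def by blast
  define w where "w = B *v (\<chi> i. (1::real))"
  have w0: "w \<noteq> 0"
  proof
    assume "w = 0"
    then have "Bi *v w = 0" by simp
    then have "(\<chi> i. (1::real)) = (0::real^'n)" unfolding w_def by (simp add: matrix_vector_mul_assoc Bi)
    then show False by (metis one_neq_zero vec_lambda_beta zero_index)
  qed
  then have nw: "norm w > 0" by simp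
  define m :: int where "m = \<lceil>\<bar>a\<bar> / norm w\<rceil> + 1"
  have c1: "\<bar>a\<bar> / norm w \<le> real_of_int \<lceil>\<bar>a\<bar> / norm w\<rceil>" by (rule le_of_int_ceiling)
  have c0: "0 \<le> \<bar>a\<bar> / norm w" using nw by simp
  have m1: "real_of_int m > \<bar>a\<bar> / norm w" "m \<ge> 1" unfolding m_def
    using c1 c0 by linarith+
  define v where "v = B *v (\<chi> i. real_of_int ((\<chi> i. m) $ i))"
  have v: "v = real_of_int m *\<^sub>R w"
    unfolding v_def w_def by (simp add: vec_eq_iff matrix_vector_mult_def sum_distrib_left algebra_simps)
  have "v \<in> L" unfolding L v_def by blast
  moreover have "norm v = real_of_int m * norm w" using m1 by (simp add: v)
  moreover have "real_of_int m * norm w > \<bar>a\<bar>" using m1 nw by (simp add: divide_less_eq)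
  ultimately show ?thesis using w0 m1 by (intro bexI[of _ v]) auto
qed

lemma Inf_min_discrete:
  fixes X :: "real set"
  assumes fin: "\<And>R. finite (X \<inter> {..R})" and ne: "X \<noteq> {}"
  shows "Inf X \<in> X" "\<And>x. x \<in> X \<Longrightarrow> Inf X \<le> x"
proof -
  obtain x0 where x0: "x0 \<in> X" using ne by blast
  define m where "m = Min (X \<inter> {..x0})"
  have mX: "m \<in> X \<inter> {..x0}" unfolding m_def using fin x0 by (intro Min_in) auto
  have mle: "m \<le> x" if "x \<in> X" for x
  proof (cases "x \<le> x0")
    case True then show ?thesis unfolding m_def using fin that by (intro Min_le) auto
  next
    case False then show ?thesis using mX by auto
  qed
  have "Inf X = m" using mX mle by (intro cInf_eq_minimum) auto
  then show "Inf X \<in> X" "\<And>x. x \<in> X \<Longrightarrow> Inf X \<le> x" using mX mle by auto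
qed

context
  fixes L :: "(real^'n) set"
  assumes lat: "is_lattice L"
begin

lemma norms_fin: "finite (lattice_norms L \<inter> {..R})"
proof -
  have "lattice_norms L \<inter> {..R} \<subseteq> norm ` {v \<in> L. norm v \<le> R}"
    unfolding lattice_norms_def by auto
  then show ?thesis using lattice_finite_ball[OF lat] by (meson finite_imageI finite_subset)
qed

lemma norms_pos: "d \<in> lattice_norms L \<Longrightarrow> 0 < d"
  unfolding lattice_norms_def by auto

lemma dist_step:
  shows "lattice_dist L (Suc j) \<in> lattice_norms L"
    "lattice_dist L j < lattice_dist L (Suc j)"
    "\<And>d. d \<in> lattice_norms L \<Longrightarrow> lattice_dist L j < d \<Longrightarrow> lattice_dist L (Suc j) \<le> d"
proof -
  define T where "T = {d \<in> lattice_norms L. d > lattice_dist L j}"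
  have fin: "finite (T \<inter> {..R})" for R
    using norms_fin[of R] unfolding T_def by (rule finite_subset[rotated]) auto
  have ne: "T \<noteq> {}"
  proof -
    obtain v where "v \<in> L" "v \<noteq> 0" "lattice_dist L j < norm v" using lattice_unbounded[OF lat] by blast
    then have "norm v \<in> T" unfolding T_def lattice_norms_def by auto
    then show ?thesis by blast
  qed
  have eq: "lattice_dist L (Suc j) = Inf T" unfolding T_def by simp
  show "lattice_dist L (Suc j) \<in> lattice_norms L" "lattice_dist L j < lattice_dist L (Suc j)"
    using Inf_min_discrete(1)[OF fin ne] unfolding eq T_def by auto
  show "\<And>d. d \<in> lattice_norms L \<Longrightarrow> lattice_dist L j < d \<Longrightarrow> lattice_dist L (Suc j) \<le> d"
    using Inf_min_discrete(2)[OF fin ne] unfolding eq T_def by auto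
qed

lemma dist_smono: "strict_mono (lattice_dist L)"
  using dist_step(2) by (simp add: strict_mono_Suc_iff)

lemma dist_pos: "1 \<le> j \<Longrightarrow> 0 < lattice_dist L j"
  using dist_step(1)[of "j - 1"] norms_pos by (cases j) auto

lemma dist_in: "1 \<le> j \<Longrightarrow> lattice_dist L j \<in> lattice_norms L"
  using dist_step(1)[of "j - 1"] by (cases j) auto

lemma dist_surj:
  assumes d: "d \<in> lattice_norms L"
  shows "\<exists>j\<ge>1. lattice_dist L j = d"
proof -
  define P where "P = {j. lattice_dist L j < d}"
  have d0: "0 < d" using norms_pos[OF d] .
  have P0: "0 \<in> P" unfolding P_def using d0 by simp
  have "finite P"
  proof -
    have inj: "inj_on (lattice_dist L) P" using dist_smono strict_mono_imp_inj_on by blast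
    have "lattice_dist L ` P \<subseteq> insert 0 (lattice_norms L \<inter> {..d})"
    proof
      fix x assume "x \<in> lattice_dist L ` P"
      then obtain j where j: "j \<in> P" "x = lattice_dist L j" by auto
      show "x \<in> insert 0 (lattice_norms L \<inter> {..d})"
      proof (cases j)
        case 0 then show ?thesis using j by simp
      next
        case (Suc i) then show ?thesis using j dist_in[of j] unfolding P_def by auto
      qed
    qed
    then have "finite (lattice_dist L ` P)" using norms_fin[of d] by (meson finite_insert finite_subset)
    then show ?thesis using inj by (simp add: finite_image_iff)
  qed
  define j0 where "j0 = Max P"
  have j0P: "j0 \<in> P" unfolding j0_def using \<open>finite P\<close> P0 by (intro Max_in) auto
  have "Suc j0 \<notin> P" using \<open>finite P\<close> unfolding j0_def by (metis Max_ge Suc_n_not_le_n)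
  then have "d \<le> lattice_dist L (Suc j0)" unfolding P_def by simp
  moreover have "lattice_dist L (Suc j0) \<le> d" using dist_step(3)[OF d] j0P unfolding P_def by simp
  ultimately show ?thesis by (intro exI[of _ "Suc j0"]) auto
qed

lemma M_char:
  "j \<in> {1..lattice_M L r} \<longleftrightarrow> 1 \<le> j \<and> lattice_dist L j \<le> 2 * r"
proof -
  define J where "J = {j. 1 \<le> j \<and> lattice_dist L j \<le> 2 * r}"
  have finJ: "finite J"
  proof -
    have inj: "inj_on (lattice_dist L) J" using dist_smono strict_mono_imp_inj_on by blast
    have "lattice_dist L ` J \<subseteq> lattice_norms L \<inter> {..2*r}" unfolding J_def using dist_in by auto
    then have "finite (lattice_dist L ` J)" using norms_fin by (meson finite_subset)
    then show ?thesis using inj by (simp add: finite_image_iff)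
  qed
  have M: "lattice_M L r = Max (insert 0 J)" unfolding lattice_M_def J_def by simp
  show ?thesis
  proof
    assume j: "j \<in> {1..lattice_M L r}"
    then have "J \<noteq> {}" using M finJ by (cases "J = {}") auto
    then have MJ0: "Max J \<in> J" using finJ by (intro Max_in) auto
    then have "Max J \<ge> 1" unfolding J_def by simp
    then have "Max (insert 0 J) = Max J" using finJ \<open>J \<noteq> {}\<close> by (simp add: Max_insert)
    then have MJ: "lattice_M L r \<in> J" using MJ0 M by simp
    have "lattice_dist L j \<le> lattice_dist L (lattice_M L r)"
      using j dist_smono by (simp add: strict_mono_less_eq)
    then show "1 \<le> j \<and> lattice_dist L j \<le> 2 * r" using MJ j unfolding J_def by auto
  next
    assume "1 \<le> j \<and> lattice_dist L j \<le> 2 * r"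
    then have jJ: "j \<in> J" "1 \<le> j" unfolding J_def by simp_all
    have "j \<le> Max (insert 0 J)" using finJ jJ by simp
    then show "j \<in> {1..lattice_M L r}" using M jJ by simp
  qed
qed

lemma sum_regroup:
  fixes F :: "real \<Rightarrow> real"
  shows "(\<Sum>v\<in>{v \<in> L. v \<noteq> 0 \<and> norm v \<le> 2 * r}. F (norm v))
       = (\<Sum>j = 1..lattice_M L r. real (lattice_mult L j) * F (lattice_dist L j))"
proof -
  define W where "W = (\<lambda>j. {v \<in> L. norm v = lattice_dist L j})"
  have finW: "finite (W j)" for j
    using lattice_finite_ball[OF lat, of "lattice_dist L j"] unfolding W_def by (rule finite_subset[rotated]) auto
  have V: "{v \<in> L. v \<noteq> 0 \<and> norm v \<le> 2 * r} = (\<Union>j\<in>{1..lattice_M L r}. W j)"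
  proof (intro equalityI subsetI)
    fix v assume v: "v \<in> {v \<in> L. v \<noteq> 0 \<and> norm v \<le> 2 * r}"
    then have "norm v \<in> lattice_norms L" unfolding lattice_norms_def by auto
    then obtain j where j: "j \<ge> 1" "lattice_dist L j = norm v" using dist_surj by blast
    then have "j \<in> {1..lattice_M L r}" by (subst M_char) (use j v in auto)
    moreover have "v \<in> W j" using j v unfolding W_def by simp
    ultimately show "v \<in> (\<Union>j\<in>{1..lattice_M L r}. W j)" by blast
  next
    fix v assume "v \<in> (\<Union>j\<in>{1..lattice_M L r}. W j)"
    then obtain j where j: "j \<in> {1..lattice_M L r}" "v \<in> W j" by auto
    then have "1 \<le> j" "lattice_dist L j \<le> 2 * r" using M_char by auto
    then show "v \<in> {v \<in> L. v \<noteq> 0 \<and> norm v \<le> 2 * r}" using j dist_pos unfolding W_def by force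
  qed
  have disj: "W i \<inter> W j = {}" if "i \<noteq> j" for i j
    using that dist_smono strict_mono_eq unfolding W_def by fastforce
  have "(\<Sum>v\<in>(\<Union>j\<in>{1..lattice_M L r}. W j). F (norm v)) = (\<Sum>j = 1..lattice_M L r. \<Sum>v\<in>W j. F (norm v))"
    using finW disj by (intro sum.UNION_disjoint) auto
  also have "\<dots> = (\<Sum>j = 1..lattice_M L r. real (lattice_mult L j) * F (lattice_dist L j))"
    by (intro sum.cong refl) (simp add: W_def lattice_mult_def)
  finally show ?thesis using V by simp
qed

end





theorem theorem7:
  fixes L :: "(real^'n) set" and M :: "'a measure" and z :: "'a \<Rightarrow> real^'n"
    and g f :: "real \<Rightarrow> real" and r :: real
  assumes lat: "is_lattice L"
    and prob: "prob_space M"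
    and noise: "distributed M lborel z (\<lambda>x. ennreal (g (norm x)))"
    and g_noninc: "\<forall>s t. 0 \<le> s \<longrightarrow> s \<le> t \<longrightarrow> g t \<le> g s"
    and f_dens: "distributed M lborel (\<lambda>\<omega>. norm (z \<omega>)) (\<lambda>\<rho>. ennreal (f \<rho>))"
    and f_nonneg: "\<forall>\<rho>. 0 \<le> f \<rho>"
    and r_pos: "r > 0"
  shows "measure M {\<omega> \<in> space M. z \<omega> \<notin> voronoi0 L}
     \<le> (\<Sum>j = 1..lattice_M L r.
           real (lattice_mult L j) *
           (LINT \<rho>:{lattice_dist L j / 2..r}|lborel.
              f \<rho> * (1 - (lattice_dist L j / (2 * \<rho>))^2) powr ((real CARD('n) - 1) / 2)))
       + (LINT \<rho>:{r<..}|lborel. f \<rho>)"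
proof -
  interpret prob_space M by (rule prob)
  define e where "e = (real CARD('n) - 1) / 2"
  have zm[measurable]: "z \<in> borel_measurable M" using distributed_measurable[OF noise] by simp
  define V where "V = {v \<in> L. v \<noteq> 0 \<and> norm v \<le> 2 * r}"
  have finV: "finite V" unfolding V_def
    using lattice_finite_ball[OF lat, of "2 * r"] by (rule finite_subset[rotated]) auto
  define I where "I = (\<lambda>l. LINT \<rho>:{l / 2..r}|lborel. f \<rho> * (1 - (l / (2 * \<rho>))^2) powr e)"
  define E0 where "E0 = {\<omega> \<in> space M. r < norm (z \<omega>)}"
  define E where "E = (\<lambda>v. {\<omega> \<in> space M. norm (z \<omega>) \<le> r \<and> norm v / 2 \<le> z \<omega> \<bullet> (v /\<^sub>R norm v)})"
  have E0m: "E0 \<in> sets M" unfolding E0_def by measurable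
  have Em: "E v \<in> sets M" for v unfolding E_def by measurable
  have sub: "{\<omega> \<in> space M. z \<omega> \<notin> voronoi0 L} \<subseteq> E0 \<union> (\<Union>v\<in>V. E v)"
  proof
    fix \<omega> assume \<omega>: "\<omega> \<in> {\<omega> \<in> space M. z \<omega> \<notin> voronoi0 L}"
    define y where "y = z \<omega>"
    obtain v where v: "v \<in> L" "v \<noteq> 0" "norm (y - v) \<le> norm y"
      using \<omega> unfolding voronoi0_def y_def by (auto simp: not_less)
    show "\<omega> \<in> E0 \<union> (\<Union>v\<in>V. E v)"
    proof (cases "r < norm y")
      case True then show ?thesis using \<omega> unfolding E0_def y_def by auto
    next
      case False
      have "norm v = norm (y - (y - v))" by simp
      also have "\<dots> \<le> norm y + norm (y - v)" by (rule norm_triangle_ineq4)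
      finally have "norm v \<le> norm y + norm (y - v)" .
      then have nv: "norm v \<le> 2 * r" using v False by simp
      have nv0: "norm v > 0" using v by simp
      have "(y - v) \<bullet> (y - v) \<le> y \<bullet> y"
        using v(3) by (simp add: dot_square_norm power_mono)
      then have "v \<bullet> v \<le> 2 * (y \<bullet> v)" by (simp add: inner_diff_left inner_diff_right inner_commute)
      then have "norm v * norm v \<le> 2 * (y \<bullet> v)" by (simp add: dot_square_norm power2_eq_square)
      then have "norm v / 2 \<le> y \<bullet> (v /\<^sub>R norm v)" using nv0
        by (simp add: field_simps inner_commute)
      then have "\<omega> \<in> E v" using \<omega> False unfolding E_def y_def by auto
      moreover have "v \<in> V" using v nv unfolding V_def by simp
      ultimately show ?thesis by blast
    qed
  qed
  have EI: "measure M (E v) \<le> I (norm v)" if "v \<in> V" for v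
  proof -
    have nv0: "norm v > 0" and nv: "norm v / 2 \<le> r" using that unfolding V_def by auto
    have u: "norm (v /\<^sub>R norm v) = 1" using nv0 by simp
    have "measure M (E v) \<le> (LINT \<rho>:{norm v / 2..r}|lborel. f \<rho> * cfun (norm v / 2) ((real CARD('n) - 1)/2) \<rho>)"
      unfolding E_def by (rule core_prob[OF prob noise g_noninc f_dens f_nonneg u]) (use nv0 nv in auto)
    also have "\<dots> = I (norm v)" unfolding I_def cfun_def e_def
      by (intro set_lebesgue_integral_cong) auto
    finally show ?thesis .
  qed
  have fint: "integrable lborel f" by (rule f_integrable[OF prob f_dens f_nonneg])
  have E0I: "measure M E0 = (LINT \<rho>:{r<..}|lborel. f \<rho>)"
  proof -
    have "E0 = (\<lambda>\<omega>. norm (z \<omega>)) -` {r<..} \<inter> space M" unfolding E0_def by auto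
    then have "emeasure M E0 = (\<integral>\<^sup>+x. ennreal (f x) * indicator {r<..} x \<partial>lborel)"
      using distributed_emeasure[OF f_dens, of "{r<..}"] by simp
    also have "\<dots> = (\<integral>\<^sup>+x. ennreal (indicator {r<..} x *\<^sub>R f x) \<partial>lborel)"
      by (intro nn_integral_cong) (simp add: indicator_def)
    also have "\<dots> = ennreal (LINT \<rho>:{r<..}|lborel. f \<rho>)"
      unfolding set_lebesgue_integral_def using fint f_nonneg
      by (intro nn_integral_eq_integral integrable_mult_indicator AE_I2) auto
    finally have "ennreal (measure M E0) = ennreal (LINT \<rho>:{r<..}|lborel. f \<rho>)"
      by (simp add: emeasure_eq_measure)
    moreover have "0 \<le> (LINT \<rho>:{r<..}|lborel. f \<rho>)"
      unfolding set_lebesgue_integral_def using f_nonneg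
      by (intro integral_nonneg_AE AE_I2) (auto simp: indicator_def)
    ultimately show ?thesis by simp
  qed
  have "measure M {\<omega> \<in> space M. z \<omega> \<notin> voronoi0 L} \<le> measure M (E0 \<union> (\<Union>v\<in>V. E v))"
    using sub E0m Em finV by (intro finite_measure_mono) auto
  also have "\<dots> \<le> measure M E0 + measure M (\<Union>v\<in>V. E v)"
    using E0m Em finV by (intro measure_Un_le) auto
  also have "measure M (\<Union>v\<in>V. E v) \<le> (\<Sum>v\<in>V. measure M (E v))"
    using Em finV by (intro finite_measure_subadditive_finite) auto
  also have "\<dots> \<le> (\<Sum>v\<in>V. I (norm v))" using EI by (intro sum_mono) auto
  also have "(\<Sum>v\<in>V. I (norm v)) = (\<Sum>j = 1..lattice_M L r. real (lattice_mult L j) * I (lattice_dist L j))"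
    unfolding V_def by (rule sum_regroup[OF lat])
  finally show ?thesis unfolding I_def e_def E0I by simp
qed


end
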